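(* Let $k\ge2$, $n\ge k$, $N=\binom nk$ and $1\le M\le N-1$. Let $H$ be the graph whose vertices are the labeled $k$-uniform hypergraphs on $[n]$ with exactly $M$ hyperedges, two hypergraphs $\mathcal H_1,\mathcal H_2$ being adjacent iff there are distinct $k$-sets $h_1\in E(\mathcal H_1)\setminus E(\mathcal H_2)$, $h_2\in E(\mathcal H_2)\setminus E(\mathcal H_1)$ with $\mathcal H_1-h_1=\mathcal H_2-h_2$. Let $m_{\mathcal H}(\mathcal H')=\frac{1}{M(N-M)+1}$ if $\mathcal H'=\mathcal H$ or $\mathcal H'$ is adjacent to $\mathcal H$, and $0$ otherwise. Then for all distinct $\mathcal H_1,\mathcal H_2\in V(H)$, \[\kappa(\mathcal H_1,\mathcal H_2)\ge\frac{N}{M(N-M)+1}.\]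
   Context: $\mathcal H-h$ denotes the hypergraph obtained by deleting hyperedge $h$. For a graph $H$ with random walk $m$ (each $m_x$ a probability distribution supported on $x$ and its neighbors), $d$ the graph distance on $H$, the transportation distance is $W(m_1,m_2)=\inf_A\sum_{x,y}A(x,y)d(x,y)$ over couplings $A$ of $m_1,m_2$, and the Ollivier Ricci curvature is $\kappa(x,y)=1-W(m_x,m_y)/d(x,y)$. *)

theory Defs
  imports Complex_Main
begin

definition ksets :: "nat \<Rightarrow> nat \<Rightarrow> nat set set" where
  "ksets n k = {e. e \<subseteq> {1..n} \<and> card e = k}"

definition hverts :: "nat \<Rightarrow> nat \<Rightarrow> nat \<Rightarrow> nat set set set" where
  "hverts n k M = {E. E \<subseteq> ksets n k \<and> card E = M}"

definition hadj :: "nat \<Rightarrow> nat \<Rightarrow> nat \<Rightarrow> nat set set \<Rightarrow> nat set set \<Rightarrow> bool" where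
  "hadj n k M H1 H2 \<longleftrightarrow> H1 \<in> hverts n k M \<and> H2 \<in> hverts n k M \<and>
     (\<exists>h1 h2. h1 \<in> H1 - H2 \<and> h2 \<in> H2 - H1 \<and> h1 \<noteq> h2 \<and> H1 - {h1} = H2 - {h2})"

definition gdist :: "('a \<Rightarrow> 'a \<Rightarrow> bool) \<Rightarrow> 'a \<Rightarrow> 'a \<Rightarrow> real" where
  "gdist adj x y = real (LEAST l. \<exists>p. length p = Suc l \<and> hd p = x \<and> last p = y \<and>
       (\<forall>i<l. adj (p ! i) (p ! Suc i)))"

definition hwalk :: "nat \<Rightarrow> nat \<Rightarrow> nat \<Rightarrow> nat set set \<Rightarrow> nat set set \<Rightarrow> real" where
  "hwalk n k M H H' = (if H' = H \<or> hadj n k M H H'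
      then 1 / (real M * (real (n choose k) - real M) + 1) else 0)"

definition coupling :: "'a set \<Rightarrow> ('a \<Rightarrow> real) \<Rightarrow> ('a \<Rightarrow> real) \<Rightarrow> ('a \<Rightarrow> 'a \<Rightarrow> real) \<Rightarrow> bool" where
  "coupling V m1 m2 A \<longleftrightarrow> (\<forall>x y. A x y \<ge> 0) \<and> (\<forall>x y. (x \<notin> V \<or> y \<notin> V) \<longrightarrow> A x y = 0) \<and>
     (\<forall>x\<in>V. (\<Sum>y\<in>V. A x y) = m1 x) \<and> (\<forall>y\<in>V. (\<Sum>x\<in>V. A x y) = m2 y)"

definition transport :: "'a set \<Rightarrow> ('a \<Rightarrow> 'a \<Rightarrow> real) \<Rightarrow> ('a \<Rightarrow> real) \<Rightarrow> ('a \<Rightarrow> real) \<Rightarrow> real" where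
  "transport V d m1 m2 = Inf {(\<Sum>x\<in>V. \<Sum>y\<in>V. A x y * d x y) | A. coupling V m1 m2 A}"

definition ollivier :: "'a set \<Rightarrow> ('a \<Rightarrow> 'a \<Rightarrow> bool) \<Rightarrow> ('a \<Rightarrow> 'a \<Rightarrow> real) \<Rightarrow> 'a \<Rightarrow> 'a \<Rightarrow> real" where
  "ollivier V adj m x y = 1 - transport V (gdist adj) (m x) (m y) / gdist adj x y"

end

theory Submission
  imports Defs
begin



definition pth :: "('a \<Rightarrow> 'a \<Rightarrow> bool) \<Rightarrow> 'a \<Rightarrow> 'a \<Rightarrow> nat \<Rightarrow> bool" where
  "pth adj x y l \<longleftrightarrow> (\<exists>p. length p = Suc l \<and> hd p = x \<and> last p = y \<and>
       (\<forall>i<l. adj (p ! i) (p ! Suc i)))"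

lemma gdist_pth: "gdist adj x y = real (LEAST l. pth adj x y l)"
  unfolding gdist_def pth_def by simp

lemma pth_refl: "pth adj a a 0"
  unfolding pth_def by (rule exI[of _ "[a]"]) simp

lemma pth_snoc:
  assumes "pth adj a b l" "adj b c" shows "pth adj a c (Suc l)"
proof -
  obtain p where p: "length p = Suc l" "hd p = a" "last p = b" "\<forall>i<l. adj (p ! i) (p ! Suc i)"
    using assms(1) unfolding pth_def by blast
  have ne: "p \<noteq> []" using p(1) by auto
  have lb: "p ! l = b" using p(1,3) ne by (simp add: last_conv_nth)
  show ?thesis unfolding pth_def
  proof (rule exI[of _ "p @ [c]"], intro conjI allI impI)
    show "length (p @ [c]) = Suc (Suc l)" using p by simp
    show "hd (p @ [c]) = a" using p ne by simp
    show "last (p @ [c]) = c" by simp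
    fix i assume i: "i < Suc l"
    show "adj ((p @ [c]) ! i) ((p @ [c]) ! Suc i)"
    proof (cases "i < l")
      case True then show ?thesis using p i by (simp add: nth_append)
    next
      case False then have "i = l" using i by simp
      then show ?thesis using p lb assms(2) by (simp add: nth_append)
    qed
  qed
qed

lemma pth_zero: "pth adj a b 0 \<Longrightarrow> a = b"
  unfolding pth_def by (auto simp: length_Suc_conv)

lemma gdist_refl: "gdist adj a a = 0"
  unfolding gdist_pth using pth_refl[of adj a] by (simp add: Least_eq_0)

lemma gdist_snoc:
  assumes "pth adj a b l" "adj b c" shows "gdist adj a c \<le> gdist adj a b + 1"
proof -
  let ?L = "LEAST l. pth adj a b l"
  have "pth adj a b ?L" using assms(1) by (rule LeastI)
  then have "pth adj a c (Suc ?L)" using assms(2) by (rule pth_snoc)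
  then have "(LEAST l. pth adj a c l) \<le> Suc ?L" by (rule Least_le)
  then show ?thesis unfolding gdist_pth by simp
qed

lemma gdist_pos:
  assumes "pth adj a b l" "a \<noteq> b" shows "gdist adj a b \<ge> 1"
proof -
  let ?L = "LEAST l. pth adj a b l"
  have "pth adj a b ?L" using assms(1) by (rule LeastI)
  then have "?L \<noteq> 0" using assms(2) pth_zero[of adj a b] by (cases "?L = 0") auto
  then show ?thesis unfolding gdist_pth by simp
qed

lemma ksets_finite: "finite (ksets n k)"
  unfolding ksets_def by (rule finite_subset[of _ "Pow {1..n}"]) auto

lemma card_ksets: "card (ksets n k) = n choose k"
  unfolding ksets_def using n_subsets[of "{1..n}" k] by simp

lemma hverts_sub: "H \<in> hverts n k M \<Longrightarrow> H \<subseteq> ksets n k \<and> card H = M \<and> finite H"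
proof -
  assume "H \<in> hverts n k M"
  then have "H \<subseteq> ksets n k" "card H = M" unfolding hverts_def by auto
  moreover have "finite H" using calculation(1) ksets_finite by (rule finite_subset)
  ultimately show ?thesis by simp
qed

lemma hadj_sym: "hadj n k M x y \<Longrightarrow> hadj n k M y x"
proof -
  assume "hadj n k M x y"
  then obtain h1 h2 where "x \<in> hverts n k M" "y \<in> hverts n k M" "h1 \<in> x - y" "h2 \<in> y - x" "h1 \<noteq> h2" "x - {h1} = y - {h2}"
    unfolding hadj_def by blast
  then show ?thesis unfolding hadj_def
    apply - apply (rule conjI, assumption, rule conjI, assumption)
    apply (rule exI[of _ h2], rule exI[of _ h1])
    apply (intro conjI; (assumption | rule not_sym, assumption | rule sym, assumption))
    done
qed

lemma hadj_neq: "hadj n k M x y \<Longrightarrow> x \<noteq> y"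
  unfolding hadj_def by blast

lemma conn:
  assumes "x \<in> hverts n k M" "y \<in> hverts n k M"
  shows "\<exists>l. pth (hadj n k M) y x l"
  using assms(1)
proof (induction "card (x - y)" arbitrary: x rule: less_induct)
  case less
  show ?case
  proof (cases "x = y")
    case True then show ?thesis using pth_refl[of "hadj n k M" y] by blast
  next
    case False
    have fx: "finite x" "card x = M" "x \<subseteq> ksets n k" using hverts_sub[OF less.prems] by auto
    have fy: "finite y" "card y = M" "y \<subseteq> ksets n k" using hverts_sub[OF assms(2)] by auto
    have "\<not> x \<subseteq> y" using card_subset_eq fx fy False by metis
    then obtain a where a: "a \<in> x" "a \<notin> y" by (auto simp: subset_iff)
    have "\<not> y \<subseteq> x" using card_subset_eq fx fy False by metis
    then obtain b where b: "b \<in> y" "b \<notin> x" by (auto simp: subset_iff)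
    define x' where "x' = insert b (x - {a})"
    have "card (x - {a}) = M - 1" using fx a by simp
    moreover have "M \<ge> 1" using fx a by (metis card_0_eq empty_iff less_one not_le)
    ultimately have cx': "card x' = M" unfolding x'_def using fx b by simp
    have x'V: "x' \<in> hverts n k M" unfolding hverts_def using cx' fx fy a b x'_def by auto
    have "x' - y = (x - y) - {a}" unfolding x'_def using b by auto
    moreover have "card ((x - y) - {a}) < card (x - y)"
      using a fx by (intro card_Diff1_less) auto
    ultimately have "card (x' - y) < card (x - y)" by simp
    then obtain l where "pth (hadj n k M) y x' l" using less.hyps[of x'] x'V by blast
    moreover have "hadj n k M x' x" unfolding hadj_def
      apply (rule conjI, rule x'V, rule conjI, rule less.prems)
      apply (rule exI[of _ b], rule exI[of _ a])
      using a b unfolding x'_def by auto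
    ultimately show ?thesis using pth_snoc[of "hadj n k M" y x' l x] by blast
  qed
qed



definition sw :: "'a \<Rightarrow> 'a \<Rightarrow> 'a \<Rightarrow> 'a" where
  "sw a b e = (if e = a then b else if e = b then a else e)"

lemma sw_sw[simp]: "sw a b (sw a b e) = e"
  unfolding sw_def by auto

lemma inj_sw: "inj (sw a b)"
  by (metis injI sw_sw)

definition TT :: "'a \<Rightarrow> 'a \<Rightarrow> 'a set \<Rightarrow> 'a set" where
  "TT a b z = sw a b ` z"

lemma TT_TT[simp]: "TT a b (TT a b z) = z"
  unfolding TT_def by (simp add: image_image)

lemma TT_none: "a \<notin> z \<Longrightarrow> b \<notin> z \<Longrightarrow> TT a b z = z"
  unfolding TT_def sw_def by (auto simp: image_iff)

lemma TT_both: "a \<in> z \<Longrightarrow> b \<in> z \<Longrightarrow> TT a b z = z"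
  unfolding TT_def sw_def by (auto simp: image_iff)

lemma TT_a: "a \<in> z \<Longrightarrow> b \<notin> z \<Longrightarrow> TT a b z = insert b (z - {a})"
  unfolding TT_def sw_def by (auto simp: image_iff)

lemma TT_b: "b \<in> z \<Longrightarrow> a \<notin> z \<Longrightarrow> TT a b z = insert a (z - {b})"
  unfolding TT_def sw_def by (auto simp: image_iff)

lemma hverts_finite: "finite (hverts n k M)"
  by (rule finite_subset[of _ "Pow (ksets n k)"]) (auto simp: hverts_def ksets_finite)

lemma TT_V:
  assumes "a \<in> ksets n k" "b \<in> ksets n k" "z \<in> hverts n k M"
  shows "TT a b z \<in> hverts n k M"
proof -
  have "z \<subseteq> ksets n k" "card z = M" using hverts_sub[OF assms(3)] by auto
  moreover have "sw a b e \<in> ksets n k" if "e \<in> ksets n k" for e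
    using that assms unfolding sw_def by auto
  ultimately have "TT a b z \<subseteq> ksets n k" unfolding TT_def by auto
  moreover have "card (TT a b z) = card z" unfolding TT_def
    using inj_sw by (metis card_image inj_on_subset subset_UNIV)
  ultimately show ?thesis using \<open>card z = M\<close> unfolding hverts_def by auto
qed

lemma TT_adj:
  assumes "a \<in> ksets n k" "b \<in> ksets n k" "hadj n k M v w"
  shows "hadj n k M (TT a b v) (TT a b w)"
proof -
  obtain h1 h2 where h: "v \<in> hverts n k M" "w \<in> hverts n k M" "h1 \<in> v - w" "h2 \<in> w - v"
      "h1 \<noteq> h2" "v - {h1} = w - {h2}"
    using assms(3) unfolding hadj_def by blast
  let ?s = "sw a b"
  have inj: "inj ?s" by (rule inj_sw)
  have 1: "?s h1 \<in> TT a b v - TT a b w" using h(3) inj unfolding TT_def by (auto simp: inj_image_mem_iff)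
  have 2: "?s h2 \<in> TT a b w - TT a b v" using h(4) inj unfolding TT_def by (auto simp: inj_image_mem_iff)
  have 3: "?s h1 \<noteq> ?s h2" using h(5) inj by (auto dest: injD)
  have "TT a b v - {?s h1} = ?s ` (v - {h1})" unfolding TT_def using inj by (simp add: image_set_diff)
  also have "\<dots> = ?s ` (w - {h2})" using h(6) by simp
  also have "\<dots> = TT a b w - {?s h2}" unfolding TT_def using inj by (simp add: image_set_diff)
  finally have 4: "TT a b v - {?s h1} = TT a b w - {?s h2}" .
  show ?thesis unfolding hadj_def
    apply (rule conjI, rule TT_V[OF assms(1,2) h(1)], rule conjI, rule TT_V[OF assms(1,2) h(2)])
    apply (rule exI[of _ "?s h1"], rule exI[of _ "?s h2"])
    using 1 2 3 4 by blast
qed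

definition Nb :: "nat \<Rightarrow> nat \<Rightarrow> nat \<Rightarrow> nat set set \<Rightarrow> nat set set set" where
  "Nb n k M v = insert v {w. hadj n k M v w}"

lemma Nb_V: "v \<in> hverts n k M \<Longrightarrow> Nb n k M v \<subseteq> hverts n k M"
  unfolding Nb_def hadj_def by auto

lemma Nb_finite: "finite (Nb n k M v)"
proof -
  have "{w. hadj n k M v w} \<subseteq> hverts n k M" unfolding hadj_def by auto
  then show ?thesis unfolding Nb_def using hverts_finite finite_subset by blast
qed

lemma TT_Nb:
  assumes "a \<in> ksets n k" "b \<in> ksets n k" "w \<in> Nb n k M v"
  shows "TT a b w \<in> Nb n k M (TT a b v)"
  using assms TT_adj[OF assms(1,2)] unfolding Nb_def by auto



lemma hadjI:
  assumes "v \<in> hverts n k M" "w \<in> hverts n k M" "h1 \<in> v" "h1 \<notin> w" "h2 \<in> w" "h2 \<notin> v"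
    "h1 \<noteq> h2" "v - {h1} = w - {h2}"
  shows "hadj n k M v w"
  unfolding hadj_def
  apply (rule conjI, rule assms(1), rule conjI, rule assms(2))
  apply (rule exI[of _ h1], rule exI[of _ h2])
  using assms by blast

lemma swapV:
  assumes "x \<in> hverts n k M" "c \<in> x" "b \<notin> x" "b \<in> ksets n k"
  shows "insert b (x - {c}) \<in> hverts n k M"
proof -
  have fx: "finite x" "card x = M" "x \<subseteq> ksets n k" using hverts_sub[OF assms(1)] by auto
  have "card (x - {c}) = M - 1" using fx assms by simp
  moreover have "M \<ge> 1" using fx assms(2) by (metis card_0_eq empty_iff less_one not_le)
  ultimately have "card (insert b (x - {c})) = M" using fx assms(3) by simp
  then show ?thesis unfolding hverts_def using fx assms by auto
qed

lemma card_Nb: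
  assumes "x \<in> hverts n k M"
  shows "card (Nb n k M x) \<le> M * ((n choose k) - M) + 1"
proof -
  have fx: "finite x" "card x = M" "x \<subseteq> ksets n k" using hverts_sub[OF assms(1)] by auto
  let ?g = "\<lambda>(u, v). insert v (x - {u})"
  have sub: "{w. hadj n k M x w} \<subseteq> ?g ` (x \<times> (ksets n k - x))"
  proof
    fix w assume "w \<in> {w. hadj n k M x w}"
    then obtain h1 h2 where h: "w \<in> hverts n k M" "h1 \<in> x - w" "h2 \<in> w - x"
      "h1 \<noteq> h2" "x - {h1} = w - {h2}"
      unfolding hadj_def by blast
    have "w = insert h2 (x - {h1})" using h(3,5) by blast
    moreover have "h2 \<in> ksets n k" using h(1,3) hverts_sub by blast
    ultimately show "w \<in> ?g ` (x \<times> (ksets n k - x))" using h(2,3) by force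
  qed
  have "card {w. hadj n k M x w} \<le> card (?g ` (x \<times> (ksets n k - x)))"
    by (rule card_mono[OF _ sub]) (auto intro: finite_cartesian_product fx ksets_finite)
  also have "\<dots> \<le> card (x \<times> (ksets n k - x))" by (rule card_image_le) (auto intro: fx ksets_finite)
  also have "\<dots> = M * ((n choose k) - M)"
    using fx by (simp add: card_cartesian_product card_Diff_subset card_ksets)
  finally have "card {w. hadj n k M x w} \<le> M * ((n choose k) - M)" .
  moreover have "finite {w. hadj n k M x w}"
    using Nb_finite[of n k M x] unfolding Nb_def by simp
  ultimately show ?thesis unfolding Nb_def by (simp add: card_insert_if)
qed



lemma card_inter:
  assumes xV: "x \<in> hverts n k M" and yV: "y \<in> hverts n k M"
    and a: "a \<in> x" "a \<notin> y" and b: "b \<in> y" "b \<notin> x" and ab: "a \<noteq> b"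
    and hy: "y = insert b (x - {a})"
  shows "(n choose k) \<le> card (Nb n k M x \<inter> Nb n k M y)"
proof -
  have fx: "x \<subseteq> ksets n k" using hverts_sub[OF xV] by auto
  have fy: "y \<subseteq> ksets n k" using hverts_sub[OF yV] by auto
  have bk: "b \<in> ksets n k" using b fy by auto
  have adjxy: "hadj n k M x y"
    by (rule hadjI[OF xV yV a(1) a(2) b(1) b(2) ab]) (use hy b in auto)
  define g where "g c = (if c = a then x else if c = b then y else if c \<in> x then insert b (x - {c})
      else insert c (x - {a}))" for c
  have mem: "g c \<in> Nb n k M x \<inter> Nb n k M y" if c: "c \<in> ksets n k" for c
  proof (cases "c = a")
    case True
    then show ?thesis using hadj_sym[OF adjxy] unfolding g_def Nb_def by simp
  next
    case ca: False
    show ?thesis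
    proof (cases "c = b")
      case True
      then show ?thesis using adjxy ab unfolding g_def Nb_def by simp
    next
      case cb: False
      show ?thesis
      proof (cases "c \<in> x")
        case cx: True
        let ?w = "insert b (x - {c})"
        have wV: "?w \<in> hverts n k M" by (rule swapV[OF xV cx b(2) bk])
        have 1: "hadj n k M x ?w"
          by (rule hadjI[OF xV wV cx]) (use b cb in auto)
        have 2: "hadj n k M y ?w"
          by (rule hadjI[OF yV wV, of c a]) (use a b cb ca cx hy in auto)
        show ?thesis using 1 2 ca cb cx unfolding g_def Nb_def by simp
      next
        case cx: False
        let ?w = "insert c (x - {a})"
        have wV: "?w \<in> hverts n k M" by (rule swapV[OF xV a(1) cx c])
        have 1: "hadj n k M x ?w"
          by (rule hadjI[OF xV wV a(1)]) (use cx ca in auto)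
        have 2: "hadj n k M y ?w"
          by (rule hadjI[OF yV wV b(1), of c]) (use a b cb ca cx hy in auto)
        show ?thesis using 1 2 ca cb cx unfolding g_def Nb_def by simp
      qed
    qed
  qed
  have inj: "inj_on g (ksets n k)"
  proof (rule inj_onI)
    fix c1 c2 assume "c1 \<in> ksets n k" "c2 \<in> ksets n k" and eq: "g c1 = g c2"
    show "c1 = c2"
    proof (rule ccontr)
      assume ne: "c1 \<noteq> c2"
      have d1: "a \<in> g c \<and> b \<notin> g c \<longleftrightarrow> c = a" for c
        unfolding g_def using a b ab hy by auto
      have d2: "b \<in> g c \<and> a \<notin> g c \<longleftrightarrow> c = b" for c
        unfolding g_def using a b ab hy by auto
      have d3: "c \<noteq> a \<Longrightarrow> c \<noteq> b \<Longrightarrow> c \<in> x \<Longrightarrow> a \<in> g c \<and> b \<in> g c \<and> c \<notin> g c" for c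
        unfolding g_def using a b ab hy by auto
      have d4: "c \<noteq> a \<Longrightarrow> c \<noteq> b \<Longrightarrow> c \<notin> x \<Longrightarrow> a \<notin> g c \<and> b \<notin> g c \<and> c \<in> g c" for c
        unfolding g_def using a b ab hy by auto
      have e3: "c \<noteq> a \<Longrightarrow> c \<noteq> b \<Longrightarrow> c \<in> x \<Longrightarrow> c' \<noteq> c \<Longrightarrow> c' \<in> x \<Longrightarrow> c' \<noteq> a \<Longrightarrow> c \<in> g c'" for c c'
        unfolding g_def using a b ab hy by auto
      have e4: "c \<noteq> a \<Longrightarrow> c \<noteq> b \<Longrightarrow> c \<notin> x \<Longrightarrow> c' \<noteq> c \<Longrightarrow> c' \<notin> x \<Longrightarrow> c' \<noteq> b \<Longrightarrow> c \<notin> g c'" for c c'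
        unfolding g_def using a b ab hy by auto
      show False
      proof (cases "c1 = a \<or> c1 = b \<or> c2 = a \<or> c2 = b")
        case True
        then show ?thesis using d1 d2 eq ne by metis
      next
        case False
        then have n: "c1 \<noteq> a" "c1 \<noteq> b" "c2 \<noteq> a" "c2 \<noteq> b" by auto
        show ?thesis
        proof (cases "c1 \<in> x"; cases "c2 \<in> x")
          assume "c1 \<in> x" "c2 \<in> x"
          then show False using d3[of c1] e3[of c1 c2] n eq ne by auto
        next
          assume "c1 \<in> x" "c2 \<notin> x"
          then show False using d3[of c1] d4[of c2] n eq by auto
        next
          assume "c1 \<notin> x" "c2 \<in> x"
          then show False using d4[of c1] d3[of c2] n eq by auto
        next
          assume "c1 \<notin> x" "c2 \<notin> x"
          then show False using d4[of c1] e4[of c1 c2] n eq ne by auto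
        qed
      qed
    qed
  qed
  have "card (ksets n k) \<le> card (Nb n k M x \<inter> Nb n k M y)"
    by (rule card_inj_on_le[OF inj]) (use mem Nb_finite in auto)
  then show ?thesis by (simp add: card_ksets)
qed



lemma edge:
  assumes xV: "x \<in> hverts n k M" and yV: "y \<in> hverts n k M" and adj: "hadj n k M x y"
  shows "\<exists>f. bij_betw f (Nb n k M x) (Nb n k M y) \<and> (\<forall>z\<in>Nb n k M x. f z = z \<or> hadj n k M z (f z)) \<and>
    (\<Sum>z\<in>Nb n k M x. (if f z = z then 0 else 1::real)) \<le> real M * (real (n choose k) - real M) + 1 - real (n choose k)"
proof -
  obtain a b where a: "a \<in> x" "a \<notin> y" and b: "b \<in> y" "b \<notin> x" and ab: "a \<noteq> b"
    and eqd: "x - {a} = y - {b}"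
    using adj unfolding hadj_def by blast
  have fx: "x \<subseteq> ksets n k" "card x = M" "finite x" using hverts_sub[OF xV] by auto
  have fy: "y \<subseteq> ksets n k" using hverts_sub[OF yV] by auto
  have ak: "a \<in> ksets n k" and bk: "b \<in> ksets n k" using a b fx fy by auto
  have hy: "y = insert b (x - {a})" using eqd b by blast
  have Tx: "TT a b x = y" using TT_a[OF a(1) b(2)] hy by simp
  have Ty: "TT a b y = x" using Tx by (metis TT_TT)
  let ?X = "Nb n k M x" and ?Y = "Nb n k M y" and ?T = "TT a b"
  have TX: "?T z \<in> ?Y" if "z \<in> ?X" for z using TT_Nb[OF ak bk that] Tx by simp
  have TY: "?T z \<in> ?X" if "z \<in> ?Y" for z using TT_Nb[OF ak bk that] Ty by simp
  have bijT: "bij_betw ?T ?X ?Y"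
    by (rule bij_betw_byWitness[where f' = ?T]) (use TX TY in auto)
  define f where "f z = (if z \<in> ?Y then z else ?T z)" for z
  have finto: "f ` ?X \<subseteq> ?Y" unfolding f_def using TX by auto
  have inj: "inj_on f ?X"
  proof (rule inj_onI)
    fix z1 z2 assume z: "z1 \<in> ?X" "z2 \<in> ?X" and eq: "f z1 = f z2"
    show "z1 = z2"
    proof (cases "z1 \<in> ?Y"; cases "z2 \<in> ?Y")
      assume "z1 \<in> ?Y" "z2 \<in> ?Y" then show ?thesis using eq unfolding f_def by simp
    next
      assume "z1 \<notin> ?Y" "z2 \<notin> ?Y" then show ?thesis using eq unfolding f_def by (metis TT_TT)
    next
      assume h: "z1 \<in> ?Y" "z2 \<notin> ?Y"
      then have "z1 = ?T z2" using eq unfolding f_def by simp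
      then have "?T z1 = z2" by simp
      moreover have "?T z1 \<in> ?Y" using TX z(1) by simp
      ultimately show ?thesis using h by simp
    next
      assume h: "z1 \<notin> ?Y" "z2 \<in> ?Y"
      then have "z2 = ?T z1" using eq unfolding f_def by simp
      then have "?T z2 = z1" by simp
      moreover have "?T z2 \<in> ?Y" using TX z(2) by simp
      ultimately show ?thesis using h by simp
    qed
  qed
  have "card (f ` ?X) = card ?Y"
    using card_image[OF inj] bij_betw_same_card[OF bijT] by simp
  then have "f ` ?X = ?Y" using card_subset_eq[OF Nb_finite finto] by simp
  then have bijf: "bij_betw f ?X ?Y" using inj unfolding bij_betw_def by simp
  have pw: "f z = z \<or> hadj n k M z (f z)" if z: "z \<in> ?X" for z
  proof (cases "z \<in> ?Y")
    case True then show ?thesis unfolding f_def by simp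
  next
    case False
    have zV: "z \<in> hverts n k M" using Nb_V[OF xV] z by auto
    have TzV: "?T z \<in> hverts n k M" by (rule TT_V[OF ak bk zV])
    show ?thesis
    proof (cases "a \<in> z"; cases "b \<in> z")
      assume "a \<in> z" "b \<in> z" then show ?thesis using TT_both[of a z b] unfolding f_def by simp
    next
      assume "a \<notin> z" "b \<notin> z" then show ?thesis using TT_none[of a z b] unfolding f_def by simp
    next
      assume h: "a \<in> z" "b \<notin> z"
      have "hadj n k M z (?T z)"
        by (rule hadjI[OF zV TzV h(1), of b]) (use h ab TT_a[OF h] in auto)
      then show ?thesis using False unfolding f_def by simp
    next
      assume h: "a \<notin> z" "b \<in> z"
      have "hadj n k M z (?T z)"
        by (rule hadjI[OF zV TzV h(2), of a]) (use h ab TT_b[of b z a] in auto)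
      then show ?thesis using False unfolding f_def by simp
    qed
  qed
  have "(\<Sum>z\<in>?X. (if f z = z then 0 else 1::real)) \<le> (\<Sum>z\<in>?X. (if z \<in> ?Y then 0 else 1::real))"
    by (rule sum_mono) (auto simp: f_def)
  also have "\<dots> = real (card (?X - ?Y))"
    using Nb_finite[of n k M x] by (simp add: sum.If_cases Diff_eq)
  also have "\<dots> = real (card ?X) - real (card (?X \<inter> ?Y))"
    using Nb_finite[of n k M x] card_Diff_subset_Int[of ?X ?Y]
    by (simp add: card_mono of_nat_diff)
  also have "\<dots> \<le> real M * (real (n choose k) - real M) + 1 - real (n choose k)"
  proof -
    have MN: "M \<le> n choose k" using card_mono[OF ksets_finite fx(1)] fx(2) by (simp add: card_ksets)
    have "real (card ?X) \<le> real (M * ((n choose k) - M) + 1)" using card_Nb[OF xV] by linarith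
    also have "\<dots> = real M * (real (n choose k) - real M) + 1" using MN by (simp add: of_nat_diff)
    finally have 1: "real (card ?X) \<le> real M * (real (n choose k) - real M) + 1" .
    have 2: "real (n choose k) \<le> real (card (?X \<inter> ?Y))"
      using card_inter[OF xV yV a b ab hy] by simp
    show ?thesis using 1 2 by linarith
  qed
  finally show ?thesis using bijf pw by blast
qed



lemma path_bij:
  fixes n k M l :: nat and p :: "nat set set list"
  defines "C \<equiv> real M * (real (n choose k) - real M) + 1 - real (n choose k)"
  assumes "p ! 0 \<in> hverts n k M"
  shows "length p > l \<Longrightarrow> (\<forall>i<l. hadj n k M (p ! i) (p ! Suc i)) \<Longrightarrow> \<exists>F. bij_betw F (Nb n k M (p ! 0)) (Nb n k M (p ! l)) \<and>
     (\<Sum>z\<in>Nb n k M (p ! 0). gdist (hadj n k M) z (F z)) \<le> real l * C"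
proof (induction l)
  case 0
  show ?case by (rule exI[of _ id]) (simp add: gdist_refl bij_betw_def)
next
  case (Suc l)
  let ?X = "Nb n k M (p ! 0)" and ?Y = "Nb n k M (p ! l)" and ?Z = "Nb n k M (p ! Suc l)"
  obtain F where F: "bij_betw F ?X ?Y" "(\<Sum>z\<in>?X. gdist (hadj n k M) z (F z)) \<le> real l * C"
    using Suc.IH Suc.prems by auto
  have adj: "hadj n k M (p ! l) (p ! Suc l)" using Suc.prems(2) by simp
  have yV: "p ! l \<in> hverts n k M" and zV: "p ! Suc l \<in> hverts n k M"
    using adj unfolding hadj_def by auto
  obtain f where f: "bij_betw f ?Y ?Z" "\<forall>w\<in>?Y. f w = w \<or> hadj n k M w (f w)"
    "(\<Sum>w\<in>?Y. (if f w = w then 0 else 1::real)) \<le> C"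
    using edge[OF yV zV adj] unfolding C_def by blast
  have XV: "?X \<subseteq> hverts n k M" by (rule Nb_V[OF assms(2)])
  have YV: "?Y \<subseteq> hverts n k M" by (rule Nb_V[OF yV])
  have pw: "gdist (hadj n k M) z (f (F z)) \<le> gdist (hadj n k M) z (F z) + (if f (F z) = F z then 0 else 1)"
    if z: "z \<in> ?X" for z
  proof -
    have Fz: "F z \<in> ?Y" using F(1) z bij_betwE by blast
    show ?thesis
    proof (cases "f (F z) = F z")
      case True then show ?thesis by simp
    next
      case False
      then have h: "hadj n k M (F z) (f (F z))" using f(2) Fz by blast
      obtain l0 where l0: "pth (hadj n k M) z (F z) l0"
        using conn[of "F z" n k M z] Fz z XV YV by blast
      show ?thesis using gdist_snoc[OF l0 h] False by simp
    qed
  qed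
  have "(\<Sum>z\<in>?X. gdist (hadj n k M) z ((f \<circ> F) z))
      \<le> (\<Sum>z\<in>?X. gdist (hadj n k M) z (F z) + (if f (F z) = F z then 0 else 1))"
    using pw by (auto intro: sum_mono)
  also have "\<dots> = (\<Sum>z\<in>?X. gdist (hadj n k M) z (F z)) + (\<Sum>z\<in>?X. (if f (F z) = F z then 0 else 1::real))"
    by (rule sum.distrib)
  also have "(\<Sum>z\<in>?X. (if f (F z) = F z then 0 else 1::real)) = (\<Sum>w\<in>?Y. (if f w = w then 0 else 1::real))"
    by (rule sum.reindex_bij_betw[OF F(1), where g = "\<lambda>w. if f w = w then 0 else 1::real"])
  finally have "(\<Sum>z\<in>?X. gdist (hadj n k M) z ((f \<circ> F) z)) \<le> real (Suc l) * C"
    using F(2) f(3) by (simp add: algebra_simps)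
  moreover have "bij_betw (f \<circ> F) ?X ?Z" using F(1) f(1) by (rule bij_betw_trans)
  ultimately show ?case by blast
qed



theorem mainTheorem7:
  fixes n k M :: nat and H1 H2 :: "nat set set"
  assumes "k \<ge> 2" and "n \<ge> k" and "1 \<le> M" and "M \<le> (n choose k) - 1"
    and "H1 \<in> hverts n k M" and "H2 \<in> hverts n k M" and "H1 \<noteq> H2"
  shows "ollivier (hverts n k M) (hadj n k M) (hwalk n k M) H1 H2
           \<ge> real (n choose k) / (real M * (real (n choose k) - real M) + 1)"
proof -
  let ?V = "hverts n k M" and ?adj = "hadj n k M" and ?d = "gdist (hadj n k M)"
  define D where "D = real M * (real (n choose k) - real M) + 1"
  define C where "C = real M * (real (n choose k) - real M) + 1 - real (n choose k)"
  define c where "c = 1 / D"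
  have MN: "M \<le> n choose k" using assms(4) by simp
  have Dpos: "D > 0" proof -
    have "real M * (real (n choose k) - real M) \<ge> 0" using MN by simp
    then show ?thesis unfolding D_def by linarith
  qed
  have hw: "hwalk n k M v w = (if w \<in> Nb n k M v then c else 0)" for v w
    unfolding hwalk_def Nb_def c_def D_def by auto
  obtain l0 where "pth ?adj H1 H2 l0" using conn[OF assms(6,5)] by blast
  define L where "L = (LEAST l. pth ?adj H1 H2 l)"
  have pL: "pth ?adj H1 H2 L" unfolding L_def by (rule LeastI) fact
  have dL: "?d H1 H2 = real L" unfolding L_def gdist_pth by simp
  have L1: "real L \<ge> 1" using gdist_pos[OF pL assms(7)] dL by simp
  obtain p where p: "length p = Suc L" "hd p = H1" "last p = H2" "\<forall>i<L. ?adj (p ! i) (p ! Suc i)"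
    using pL unfolding pth_def by blast
  have p0: "p ! 0 = H1" using p hd_conv_nth[of p] by fastforce
  have pLast: "p ! L = H2" using p last_conv_nth[of p] by fastforce
  obtain F where F: "bij_betw F (Nb n k M H1) (Nb n k M H2)"
    "(\<Sum>z\<in>Nb n k M H1. ?d z (F z)) \<le> real L * C"
    using path_bij[of p n k M L] p p0 pLast assms(5) unfolding C_def by auto
  let ?X = "Nb n k M H1" and ?Y = "Nb n k M H2"
  have XV: "?X \<subseteq> ?V" by (rule Nb_V[OF assms(5)])
  have YV: "?Y \<subseteq> ?V" by (rule Nb_V[OF assms(6)])
  have FY: "F z \<in> ?Y" if "z \<in> ?X" for z using F(1) that bij_betwE by blast
  define A where "A z w = (if z \<in> ?X \<and> w = F z then c else 0)" for z w
  have cpos: "c > 0" unfolding c_def using Dpos by simp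
  have row: "(\<Sum>w\<in>?V. A z w * g w) = (if z \<in> ?X then c * g (F z) else 0)" for z g
  proof (cases "z \<in> ?X")
    case True
    have "(\<Sum>w\<in>?V. A z w * g w) = (\<Sum>w\<in>?V. if w = F z then c * g w else 0)"
      by (rule sum.cong) (auto simp: A_def True)
    also have "\<dots> = c * g (F z)" using FY[OF True] YV hverts_finite[of n k M] by (auto simp: sum.delta)
    finally show ?thesis using True by simp
  next
    case False then show ?thesis unfolding A_def by simp
  qed
  have coup: "coupling ?V (hwalk n k M H1) (hwalk n k M H2) A"
    unfolding coupling_def
  proof (intro conjI allI impI ballI)
    fix x y show "A x y \<ge> 0" unfolding A_def using cpos by simp
  next
    fix x y assume "x \<notin> ?V \<or> y \<notin> ?V"
    then show "A x y = 0" unfolding A_def using XV YV FY by auto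
  next
    fix z assume "z \<in> ?V"
    show "(\<Sum>w\<in>?V. A z w) = hwalk n k M H1 z"
      using row[of z "\<lambda>_. 1"] by (simp add: hw)
  next
    fix w assume wV: "w \<in> ?V"
    show "(\<Sum>z\<in>?V. A z w) = hwalk n k M H2 w"
    proof (cases "w \<in> ?Y")
      case True
      then obtain z0 where z0: "z0 \<in> ?X" "F z0 = w" using F(1) True unfolding bij_betw_def by (metis imageE)
      have "(\<Sum>z\<in>?V. A z w) = (\<Sum>z\<in>?V. if z = z0 then c else 0)"
      proof (rule sum.cong)
        fix z assume "z \<in> ?V"
        have "(z \<in> ?X \<and> w = F z) \<longleftrightarrow> z = z0"
          using z0 F(1) unfolding bij_betw_def inj_on_def by auto
        then show "A z w = (if z = z0 then c else 0)" unfolding A_def by simp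
      qed simp
      also have "\<dots> = c" using z0 XV hverts_finite[of n k M] by (auto simp: sum.delta)
      finally show ?thesis using True by (simp add: hw)
    next
      case False
      then have "A z w = 0" for z unfolding A_def using FY by auto
      then show ?thesis using False by (simp add: hw)
    qed
  qed
  define cost where "cost = (\<Sum>x\<in>?V. \<Sum>y\<in>?V. A x y * ?d x y)"
  have "cost = (\<Sum>x\<in>?V. if x \<in> ?X then c * ?d x (F x) else 0)"
    unfolding cost_def by (rule sum.cong) (simp_all add: row)
  also have "\<dots> = (\<Sum>x\<in>?X. c * ?d x (F x))"
    using sum.inter_restrict[OF hverts_finite[of n k M], where B = ?X and g = "\<lambda>x. c * ?d x (F x)"]
      Int_absorb2[OF XV] by (simp add: Int_commute)
  also have "\<dots> = c * (\<Sum>x\<in>?X. ?d x (F x))" by (simp add: sum_distrib_left)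
  also have "\<dots> \<le> c * (real L * C)" using F(2) cpos by (simp add: mult_left_mono)
  finally have costle: "cost \<le> c * (real L * C)" .
  have W: "transport ?V ?d (hwalk n k M H1) (hwalk n k M H2) \<le> cost"
    unfolding transport_def
  proof (rule cInf_lower)
    show "cost \<in> {\<Sum>x\<in>?V. \<Sum>y\<in>?V. A x y * ?d x y |A. coupling ?V (hwalk n k M H1) (hwalk n k M H2) A}"
      using coup unfolding cost_def by blast
    show "bdd_below {\<Sum>x\<in>?V. \<Sum>y\<in>?V. A x y * ?d x y |A. coupling ?V (hwalk n k M H1) (hwalk n k M H2) A}"
    proof (rule bdd_belowI[of _ 0])
      fix s assume "s \<in> {\<Sum>x\<in>?V. \<Sum>y\<in>?V. A x y * ?d x y |A. coupling ?V (hwalk n k M H1) (hwalk n k M H2) A}"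
      then obtain B where B: "coupling ?V (hwalk n k M H1) (hwalk n k M H2) B"
        "s = (\<Sum>x\<in>?V. \<Sum>y\<in>?V. B x y * ?d x y)" by blast
      have "B x y * ?d x y \<ge> 0" for x y
        using B(1) unfolding coupling_def gdist_def by simp
      then show "0 \<le> s" using B(2) by (simp add: sum_nonneg)
    qed
  qed
  define Wt where "Wt = transport ?V ?d (hwalk n k M H1) (hwalk n k M H2)"
  have Wle: "Wt / real L \<le> c * C"
    using W costle L1 unfolding Wt_def by (simp add: divide_le_eq mult.commute mult.left_commute)
  have "real (n choose k) / D = 1 - c * C" unfolding c_def C_def D_def using Dpos[unfolded D_def]
    by (simp add: field_simps)
  also have "\<dots> \<le> 1 - Wt / real L" using Wle by simp
  also have "\<dots> = ollivier ?V ?adj (hwalk n k M) H1 H2" unfolding ollivier_def Wt_def dL by simp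
  finally show ?thesis unfolding D_def .
qed


end
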